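(* Let $m\ge3$, $C$ a set of $m$ candidates, $T$ the set of all $m!$ strict rankings of $C$, $w=(w_1,\dots,w_m)$ with $1=w_1\ge\cdots\ge w_m=0$, and $\sigma_t(\alpha)=w_i$ where $i$ is the position of $\alpha$ in $t\in T$. Let $(N_t)_{t\in T}$ be nonnegative integers and $|\alpha|=\sum_tN_t\sigma_t(\alpha)$. Suppose $|a|>|\alpha|$ for all $\alpha\ne a$, and $b\ne a$ satisfies $|b|\ge|\alpha|$ for all $\alpha\ne a$. Let $\bar T_{ba}$ be the set of types ranking $b$ above $a$, $T_b$ the set of types ranking $b$ first, $T_i$ ($1\le i\le m-1$) the set of types ranking $b$ in position $i$ and $a$ in position $i+1$, and $T_{ba}=\bigcup_{i=1}^{m-1}T_i$. Let $Q_3(b)$ be the optimal value (or $+\infty$ if infeasible) of: minimize $\sum_{t\in\bar T_{ba}}x_t$ subject to $$\sum_{t\in T_b}y_t(1-\sigma_t(\alpha))-\sum_{t\in\bar T_{ba}}x_t(\sigma_t(b)-\sigma_t(\alpha))\ge|\alpha|-|b|\quad\forall\alpha\ne b,$$ $\sum_{t\in T_b}y_t=\sum_{t\in\bar T_{ba}}x_t$, $x_t\ge0$, $y_t\ge0$ (real variables). Let $Q$ be the optimal value (or $+\infty$ if infeasible) of the same linear program with $\bar T_{ba}$ replaced by $T_{ba}$ throughout (in the objective, in the constraints, and in the index set of the variables $x_t$). Then $Q_3(b)=Q$. *)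

theory Defs
  imports Complex_Main "HOL-Library.Extended_Real"
begin

text \<open>Candidates are the elements of a finite type 'c, so m = card (UNIV::'c set).
  A ranking (type) t is a bijection from the candidates onto positions
  {0..<m}; the (1-based) position of alpha in t is t alpha + 1.\<close>

definition rankings :: "('c::finite \<Rightarrow> nat) set" where
  "rankings = {t. bij_betw t UNIV {0..<card (UNIV::'c set)}}"

definition sigma :: "(nat \<Rightarrow> real) \<Rightarrow> ('c::finite \<Rightarrow> nat) \<Rightarrow> 'c \<Rightarrow> real" where
  "sigma w t \<alpha> = w (t \<alpha> + 1)"

definition score :: "(nat \<Rightarrow> real) \<Rightarrow> (('c::finite \<Rightarrow> nat) \<Rightarrow> nat) \<Rightarrow> 'c \<Rightarrow> real" where
  "score w N \<alpha> = (\<Sum>t\<in>rankings. real (N t) * sigma w t \<alpha>)"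

definition T_first :: "'c::finite \<Rightarrow> ('c \<Rightarrow> nat) set" where
  "T_first b = {t\<in>rankings. t b = 0}"

definition T_above :: "'c::finite \<Rightarrow> 'c \<Rightarrow> ('c \<Rightarrow> nat) set" where
  "T_above b a = {t\<in>rankings. t b < t a}"

definition T_i :: "'c::finite \<Rightarrow> 'c \<Rightarrow> nat \<Rightarrow> ('c \<Rightarrow> nat) set" where
  "T_i b a i = {t\<in>rankings. t b + 1 = i \<and> t a + 1 = i + 1}"

definition T_adj :: "'c::finite \<Rightarrow> 'c \<Rightarrow> ('c \<Rightarrow> nat) set" where
  "T_adj b a = (\<Union>i\<in>{1..card (UNIV::'c set) - 1}. T_i b a i)"

text \<open>Optimal value (in ereal; +infinity if infeasible) of the LP:
  minimize sum_{t in S} x_t subject to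
  sum_{t in T_b} y_t (1 - sigma_t(alpha)) - sum_{t in S} x_t (sigma_t(b) - sigma_t(alpha))
     >= |alpha| - |b|   for all alpha /= b,
  sum_{t in T_b} y_t = sum_{t in S} x_t, x >= 0 on S, y >= 0 on T_b.
  Variables are real functions; only values on S and T_b matter.\<close>
definition lp_value ::
  "(nat \<Rightarrow> real) \<Rightarrow> (('c::finite \<Rightarrow> nat) \<Rightarrow> nat) \<Rightarrow> 'c \<Rightarrow> ('c \<Rightarrow> nat) set \<Rightarrow> ereal" where
  "lp_value w N b S = Inf {ereal (\<Sum>t\<in>S. x t) | x y.
      (\<forall>t\<in>S. x t \<ge> 0) \<and> (\<forall>t\<in>T_first b. y t \<ge> 0) \<and>
      (\<forall>\<alpha>. \<alpha> \<noteq> b \<longrightarrow>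
         (\<Sum>t\<in>T_first b. y t * (1 - sigma w t \<alpha>))
         - (\<Sum>t\<in>S. x t * (sigma w t b - sigma w t \<alpha>))
         \<ge> score w N \<alpha> - score w N b) \<and>
      (\<Sum>t\<in>T_first b. y t) = (\<Sum>t\<in>S. x t)}"

end

theory Submission
  imports Defs
begin

lemma finite_rankings: "finite (rankings :: ('c::finite \<Rightarrow> nat) set)"
proof -
  have "finite {f::'c\<Rightarrow>nat. \<forall>x. (x \<in> UNIV \<longrightarrow> f x \<in> {0..<card (UNIV::'c set)}) \<and> (x \<notin> UNIV \<longrightarrow> f x = 0)}"
    by (rule finite_set_of_finite_funs) auto
  moreover have "rankings \<subseteq> {f::'c\<Rightarrow>nat. \<forall>x. (x \<in> UNIV \<longrightarrow> f x \<in> {0..<card (UNIV::'c set)}) \<and> (x \<notin> UNIV \<longrightarrow> f x = 0)}"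
    unfolding rankings_def bij_betw_def by auto
  ultimately show ?thesis by (rule finite_subset[rotated])
qed

definition mv :: "'c \<Rightarrow> 'c \<Rightarrow> ('c \<Rightarrow> nat) \<Rightarrow> ('c \<Rightarrow> nat)" where
  "mv b a t = (\<lambda>c. if c = b then t a - 1 else if t b < t c \<and> t c < t a then t c - 1 else t c)"

lemma mv_rank:
  fixes t :: "'c::finite \<Rightarrow> nat"
  assumes t: "t \<in> T_above b a" and ba: "b \<noteq> a"
  shows "mv b a t \<in> rankings"
proof -
  let ?m = "card (UNIV::'c set)"
  have bij: "bij_betw t UNIV {0..<?m}" and lt: "t b < t a" using t unfolding T_above_def rankings_def by auto
  have inj: "inj t" and rng: "\<And>c. t c < ?m" using bij unfolding bij_betw_def by auto
  have "inj (mv b a t)"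
  proof (rule injI)
    fix x y assume "mv b a t x = mv b a t y"
    moreover have "t x = t y \<Longrightarrow> x = y" using inj by (simp add: inj_eq)
    moreover have "x = b \<or> t x \<noteq> t b" using inj by (auto simp add: inj_eq)
    moreover have "y = b \<or> t y \<noteq> t b" using inj by (auto simp add: inj_eq)
    ultimately show "x = y" using lt unfolding mv_def
      by (cases "x = b"; cases "y = b"; auto split: if_splits)
  qed
  moreover have sub: "range (mv b a t) \<subseteq> {0..<?m}"
    using rng lt unfolding mv_def by (auto simp: less_imp_diff_less)
  moreover have "card (range (mv b a t)) = card {0..<?m}"
    using \<open>inj (mv b a t)\<close> by (simp add: card_image)
  ultimately have "range (mv b a t) = {0..<?m}"
    by (metis card_subset_eq finite_atLeastLessThan)
  then show ?thesis unfolding rankings_def bij_betw_def using \<open>inj (mv b a t)\<close> by auto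
qed

lemma mv_adj:
  fixes t :: "'c::finite \<Rightarrow> nat"
  assumes t: "t \<in> T_above b a" and ba: "b \<noteq> a"
  shows "mv b a t \<in> T_adj b a"
proof -
  let ?m = "card (UNIV::'c set)"
  have bij: "bij_betw t UNIV {0..<?m}" and lt: "t b < t a" using t unfolding T_above_def rankings_def by auto
  have rng: "\<And>c. t c < ?m" using bij unfolding bij_betw_def by auto
  have "mv b a t \<in> T_i b a (t a)"
    unfolding T_i_def using mv_rank[OF assms] lt ba by (auto simp: mv_def)
  moreover have "t a \<in> {1..?m - 1}" using lt rng[of a] by auto
  ultimately show ?thesis unfolding T_adj_def by blast
qed

lemma mv_sigma:
  fixes t :: "'c::finite \<Rightarrow> nat"
  assumes t: "t \<in> T_above b a" and ba: "b \<noteq> a" and al: "\<alpha> \<noteq> b"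
    and wmono: "\<And>i j. 1 \<le> i \<Longrightarrow> i \<le> j \<Longrightarrow> j \<le> card (UNIV::'c set) \<Longrightarrow> w j \<le> w i"
  shows "sigma w (mv b a t) b - sigma w (mv b a t) \<alpha> \<le> sigma w t b - sigma w t \<alpha>"
proof -
  let ?m = "card (UNIV::'c set)"
  have bij: "bij_betw t UNIV {0..<?m}" and lt: "t b < t a" using t unfolding T_above_def rankings_def by auto
  have rng: "\<And>c. t c < ?m" using bij unfolding bij_betw_def by auto
  have 1: "sigma w (mv b a t) b \<le> sigma w t b"
    unfolding sigma_def mv_def using lt rng[of a] by (auto intro!: wmono)
  have 2: "sigma w t \<alpha> \<le> sigma w (mv b a t) \<alpha>"
    unfolding sigma_def mv_def using al rng[of \<alpha>] by (auto intro!: wmono)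
  show ?thesis using 1 2 by linarith
qed

lemma adj_sub: "T_adj b a \<subseteq> T_above b a"
  unfolding T_adj_def T_i_def T_above_def by auto

theorem proposition8:
  fixes w :: "nat \<Rightarrow> real" and N :: "('c::finite \<Rightarrow> nat) \<Rightarrow> nat" and a b :: 'c
  assumes m3: "card (UNIV::'c set) \<ge> 3"
    and w1: "w 1 = 1" and wm: "w (card (UNIV::'c set)) = 0"
    and wmono: "\<And>i j. 1 \<le> i \<Longrightarrow> i \<le> j \<Longrightarrow> j \<le> card (UNIV::'c set) \<Longrightarrow> w j \<le> w i"
    and a_win: "\<And>\<alpha>. \<alpha> \<noteq> a \<Longrightarrow> score w N a > score w N \<alpha>"
    and ba: "b \<noteq> a"
    and b_second: "\<And>\<alpha>. \<alpha> \<noteq> a \<Longrightarrow> score w N b \<ge> score w N \<alpha>"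
  shows "lp_value w N b (T_above b a) = lp_value w N b (T_adj b a)"
proof -
  let ?A = "T_above b a" and ?D = "T_adj b a"
  have "?A \<subseteq> rankings" unfolding T_above_def by blast
  then have fA: "finite ?A" using finite_rankings finite_subset by blast
  have fD: "finite ?D" using finite_subset[OF adj_sub fA] .
  have restr: "(\<Sum>t\<in>?A. (if t \<in> ?D then g t else 0)) = (\<Sum>t\<in>?D. g t)" for g :: "_ \<Rightarrow> real"
    using sum.inter_restrict[OF fA, of g ?D, symmetric] adj_sub[of b a]
    by (simp add: Int_absorb1)
  have grp: "(\<Sum>t'\<in>?D. (\<Sum>t\<in>{t\<in>?A. mv b a t = t'}. x t) * c t') = (\<Sum>t\<in>?A. x t * c (mv b a t))"
    for x c :: "_ \<Rightarrow> real"
  proof -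
    have "(\<Sum>t'\<in>?D. (\<Sum>t\<in>{t\<in>?A. mv b a t = t'}. x t) * c t')
        = (\<Sum>t'\<in>?D. (\<Sum>t\<in>{t\<in>?A. mv b a t = t'}. x t * c (mv b a t)))"
      unfolding sum_distrib_right by (intro sum.cong refl) simp
    also have "\<dots> = (\<Sum>t\<in>?A. x t * c (mv b a t))"
      by (rule sum.group[OF fA fD]) (use mv_adj[OF _ ba] in auto)
    finally show ?thesis .
  qed
  let ?P = "\<lambda>S x y. (\<forall>t\<in>S. x t \<ge> 0) \<and> (\<forall>t\<in>T_first b. y t \<ge> 0) \<and>
      (\<forall>\<alpha>. \<alpha> \<noteq> b \<longrightarrow>
         (\<Sum>t\<in>T_first b. y t * (1 - sigma w t \<alpha>))
         - (\<Sum>t\<in>S. x t * (sigma w t b - sigma w t \<alpha>))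
         \<ge> score w N \<alpha> - score w N b) \<and>
      (\<Sum>t\<in>T_first b. y t) = (\<Sum>t\<in>S. x t)"
  have "{ereal (\<Sum>t\<in>?A. x t) | x y. ?P ?A x y} = {ereal (\<Sum>t\<in>?D. x t) | x y. ?P ?D x y}"
  proof (intro equalityI subsetI)
    fix v assume "v \<in> {ereal (\<Sum>t\<in>?A. x t) | x y. ?P ?A x y}"
    then obtain x y where v: "v = ereal (\<Sum>t\<in>?A. x t)" and P: "?P ?A x y" by blast
    define x' where "x' t' = (\<Sum>t\<in>{t\<in>?A. mv b a t = t'}. x t)" for t'
    have s1: "(\<Sum>t\<in>?D. x' t) = (\<Sum>t\<in>?A. x t)"
      using grp[of x "\<lambda>_. 1"] unfolding x'_def by simp
    have c1: "\<forall>t\<in>?D. 0 \<le> x' t" unfolding x'_def using P by (auto intro!: sum_nonneg)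
    have c3: "\<forall>\<alpha>. \<alpha> \<noteq> b \<longrightarrow> score w N \<alpha> - score w N b \<le> (\<Sum>t\<in>T_first b. y t * (1 - sigma w t \<alpha>)) -
          (\<Sum>t\<in>?D. x' t * (sigma w t b - sigma w t \<alpha>))"
    proof (intro allI impI)
      fix \<alpha> :: 'c assume al: "\<alpha> \<noteq> b"
      have "(\<Sum>t\<in>?D. x' t * (sigma w t b - sigma w t \<alpha>))
          = (\<Sum>t\<in>?A. x t * (sigma w (mv b a t) b - sigma w (mv b a t) \<alpha>))"
        unfolding x'_def by (rule grp)
      also have "\<dots> \<le> (\<Sum>t\<in>?A. x t * (sigma w t b - sigma w t \<alpha>))"
        using P mv_sigma[OF _ ba al wmono] by (auto intro!: sum_mono mult_left_mono)
      finally have le: "(\<Sum>t\<in>?D. x' t * (sigma w t b - sigma w t \<alpha>)) \<le> (\<Sum>t\<in>?A. x t * (sigma w t b - sigma w t \<alpha>))" .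
      have "score w N \<alpha> - score w N b \<le> (\<Sum>t\<in>T_first b. y t * (1 - sigma w t \<alpha>))
         - (\<Sum>t\<in>?A. x t * (sigma w t b - sigma w t \<alpha>))" using P al by blast
      then show "score w N \<alpha> - score w N b \<le> (\<Sum>t\<in>T_first b. y t * (1 - sigma w t \<alpha>)) -
          (\<Sum>t\<in>?D. x' t * (sigma w t b - sigma w t \<alpha>))"
        using diff_left_mono[OF le] order_trans by blast
    qed
    have c2: "\<forall>t\<in>T_first b. y t \<ge> 0" using P by blast
    have c4: "(\<Sum>t\<in>T_first b. y t) = (\<Sum>t\<in>?D. x' t)" using P s1 by simp
    have "?P ?D x' y" using c1 c2 c3 c4 by blast
    moreover have "v = ereal (\<Sum>t\<in>?D. x' t)" using v s1 by simp
    ultimately show "v \<in> {ereal (\<Sum>t\<in>?D. x t) | x y. ?P ?D x y}" by blast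
  next
    fix v assume "v \<in> {ereal (\<Sum>t\<in>?D. x t) | x y. ?P ?D x y}"
    then obtain x y where v: "v = ereal (\<Sum>t\<in>?D. x t)" and P: "?P ?D x y" by blast
    define x' where "x' t = (if t \<in> ?D then x t else 0)" for t
    have s1: "(\<Sum>t\<in>?A. x' t) = (\<Sum>t\<in>?D. x t)"
      unfolding x'_def by (rule restr)
    have s2: "(\<Sum>t\<in>?A. x' t * c t) = (\<Sum>t\<in>?D. x t * c t)" for c
    proof -
      have eq: "(\<lambda>t. x' t * c t) = (\<lambda>t. if t \<in> ?D then x t * c t else 0)" by (auto simp: x'_def)
      show ?thesis unfolding eq by (rule restr)
    qed
    have d1: "\<forall>t\<in>?A. 0 \<le> x' t" unfolding x'_def using P by auto
    have d2: "\<forall>t\<in>T_first b. y t \<ge> 0" using P by blast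
    have d3: "\<forall>\<alpha>. \<alpha> \<noteq> b \<longrightarrow> score w N \<alpha> - score w N b \<le> (\<Sum>t\<in>T_first b. y t * (1 - sigma w t \<alpha>)) -
          (\<Sum>t\<in>?A. x' t * (sigma w t b - sigma w t \<alpha>))"
      unfolding s2 using P by blast
    have d4: "(\<Sum>t\<in>T_first b. y t) = (\<Sum>t\<in>?A. x' t)" using P s1 by simp
    have "?P ?A x' y" using d1 d2 d3 d4 by blast
    moreover have "v = ereal (\<Sum>t\<in>?A. x' t)" using v s1 by simp
    ultimately show "v \<in> {ereal (\<Sum>t\<in>?A. x t) | x y. ?P ?A x y}" by blast
  qed
  then show ?thesis unfolding lp_value_def by simp
qed

end
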